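(* Let $K$ be a $\mathbb{Z}$-field. For all $k,n\in\mathbb{N}$ with $n\geq 1$, the sets $$\{(x,y)\in K^2 \mid \mathrm{ord}\, x=\mathrm{ord}\, y\}\qquad\text{and}\qquad \{x\in K^\times \mid \mathrm{ord}\, x\equiv k \bmod n\}$$ are definable (with parameters from $K$) in the language $\mathcal{L}_{\mathrm{aff}}^{\pi}$.
   Context: A $\mathbb{Z}$-field is a valued field $K$ (valuation $\mathrm{ord}: K^\times\to\Gamma_K$, $\mathrm{ord}\,0=\infty$, valuation ring $R_K$) containing an element $\pi$ of minimal positive valuation, normalized so that $\mathrm{ord}\,\pi=1$, such that $\Gamma_K$ is a $\mathbb{Z}$-group (an ordered abelian group elementarily equivalent to $\mathbb{Z}$, with least positive element $1$; in particular for every $\gamma\in\Gamma_K$ and $n\ge1$ there is a unique $\gamma_n\in\{0,\dots,n-1\}$ with $\gamma\equiv\gamma_n \bmod n\Gamma_K$), and which is equipped with a compatible system of angular component maps $\mathrm{ac}_{\pi^m}:K\to R_K/\pi^mR_K$ ($m\ge1$), multiplicative on $K^\times$ with values in $(R_K/\pi^mR_K)^\times$, with $\mathrm{ac}_{\pi^m}(\pi)=1$, $\mathrm{ac}_{\pi^m}(u)=u \bmod \pi^m$ for units $u$, and $\mathrm{ac}_{\pi^m}(0)=0$. No assumption is made on the residue field, the characteristic, or Henselianity. For $x\in K^\times$ let $\gamma_n(x)\in\{0,\dots,n-1\}$ be the remainder of $\mathrm{ord}\,x$ modulo $n$. For $n,m\ge1$, $\Lambda_{n,m}$ is the quotient of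 $K$ by the equivalence relation: $x\sim y$ iff $x=y=0$, or $x,y\neq0$, $\gamma_n(x)=\gamma_n(y)$ and $\mathrm{ac}_{\pi^m}(x)=\mathrm{ac}_{\pi^m}(y)$; $\rho_{n,m}:K\to\Lambda_{n,m}$ is the quotient map (informally $\rho_{n,m}(x)=\pi^{\gamma_n(x)}\mathrm{ac}_{\pi^m}(x)$). The multi-sorted language $\mathcal{L}_{\mathrm{aff}}^{\pi}$ has a main sort $K$ with symbols $+$, $\cdot_\pi$ (the map $x\mapsto \pi x$) and the binary relation $x\mid y \iff \mathrm{ord}\,x\le \mathrm{ord}\,y$; auxiliary sorts $\Lambda_{n,m}$ (for all $n,m\ge1$) carrying no symbols; and the maps $\rho_{n,m}:K\to\Lambda_{n,m}$. Parameters from $K$ are allowed. *)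

theory Defs
  imports Main
begin

definition natmul :: "nat \<Rightarrow> 'g::ab_group_add \<Rightarrow> 'g" where
  "natmul n g = (\<Sum>i<n. g)"

definition zgroup :: "'g::linordered_ab_group_add \<Rightarrow> bool" where
  "zgroup one \<longleftrightarrow> 0 < one \<and> (\<forall>g. 0 < g \<longrightarrow> one \<le> g) \<and>
     (\<forall>n::nat. n \<ge> 1 \<longrightarrow> (\<forall>g. \<exists>!r. r < n \<and> (\<exists>d. g = natmul n d + natmul r one)))"

text \<open>The valuation is given by ord on K^x; ord 0 = infinity is encoded by
  the extended valuation val (None = infinity).\<close>
definition val :: "('a::field \<Rightarrow> 'g) \<Rightarrow> 'a \<Rightarrow> 'g option" where
  "val ord x = (if x = 0 then None else Some (ord x))"

definition vdvd :: "('a::field \<Rightarrow> 'g::linordered_ab_group_add) \<Rightarrow> 'a \<Rightarrow> 'a \<Rightarrow> bool" where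
  "vdvd ord x y \<longleftrightarrow> y = 0 \<or> (x \<noteq> 0 \<and> ord x \<le> ord y)"

definition vring :: "('a::field \<Rightarrow> 'g::linordered_ab_group_add) \<Rightarrow> 'a set" where
  "vring ord = {x. x = 0 \<or> 0 \<le> ord x}"

definition pcong :: "('a::field \<Rightarrow> 'g::linordered_ab_group_add) \<Rightarrow> 'a \<Rightarrow> nat \<Rightarrow> 'a \<Rightarrow> 'a \<Rightarrow> bool" where
  "pcong ord pi m a b \<longleftrightarrow> vdvd ord (pi ^ m) (a - b)"

text \<open>Angular component maps ac_{pi^m} : K \<rightarrow> R_K / pi^m R_K are represented by
  functions ac m : K \<rightarrow> R_K giving a representative; elements of R/pi^m R are
  compared with pcong.\<close>
definition zfield :: "('a::field \<Rightarrow> 'g::linordered_ab_group_add) \<Rightarrow> 'a \<Rightarrow> (nat \<Rightarrow> 'a \<Rightarrow> 'a) \<Rightarrow> bool" where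
  "zfield ord pi ac \<longleftrightarrow>
     \<comment> \<open>valuation K^x onto Gamma\<close>
     (\<forall>g. \<exists>x. x \<noteq> 0 \<and> ord x = g) \<and>
     (\<forall>x y. x \<noteq> 0 \<longrightarrow> y \<noteq> 0 \<longrightarrow> ord (x * y) = ord x + ord y) \<and>
     (\<forall>x y. x \<noteq> 0 \<longrightarrow> y \<noteq> 0 \<longrightarrow> x + y \<noteq> 0 \<longrightarrow> min (ord x) (ord y) \<le> ord (x + y)) \<and>
     \<comment> \<open>pi has minimal positive valuation, normalised to 1, Gamma a Z-group\<close>
     pi \<noteq> 0 \<and> zgroup (ord pi) \<and>
     \<comment> \<open>angular components\<close>
     (\<forall>m\<ge>1. \<forall>x. ac m x \<in> vring ord) \<and>
     (\<forall>m\<ge>1. \<forall>x. x \<noteq> 0 \<longrightarrow> ac m x \<noteq> 0 \<and> ord (ac m x) = 0) \<and>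
     (\<forall>m\<ge>1. \<forall>x y. x \<noteq> 0 \<longrightarrow> y \<noteq> 0 \<longrightarrow> pcong ord pi m (ac m (x * y)) (ac m x * ac m y)) \<and>
     (\<forall>m\<ge>1. pcong ord pi m (ac m pi) 1) \<and>
     (\<forall>m\<ge>1. \<forall>u. u \<noteq> 0 \<longrightarrow> ord u = 0 \<longrightarrow> pcong ord pi m (ac m u) u) \<and>
     (\<forall>m\<ge>1. pcong ord pi m (ac m 0) 0) \<and>
     \<comment> \<open>compatibility of the system\<close>
     (\<forall>m m' x. 1 \<le> m \<longrightarrow> m \<le> m' \<longrightarrow> pcong ord pi m (ac m' x) (ac m x))"

definition gamma :: "('a::field \<Rightarrow> 'g::linordered_ab_group_add) \<Rightarrow> 'a \<Rightarrow> nat \<Rightarrow> 'a \<Rightarrow> nat" where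
  "gamma ord pi n x = (THE r. r < n \<and> (\<exists>d. ord x = natmul n d + natmul r (ord pi)))"

text \<open>the equivalence relation defining Lambda_{n,m}\<close>
definition lsim :: "('a::field \<Rightarrow> 'g::linordered_ab_group_add) \<Rightarrow> 'a \<Rightarrow> (nat \<Rightarrow> 'a \<Rightarrow> 'a)
    \<Rightarrow> nat \<Rightarrow> nat \<Rightarrow> 'a \<Rightarrow> 'a \<Rightarrow> bool" where
  "lsim ord pi ac n m x y \<longleftrightarrow> (x = 0 \<and> y = 0) \<or>
     (x \<noteq> 0 \<and> y \<noteq> 0 \<and> gamma ord pi n x = gamma ord pi n y \<and> pcong ord pi m (ac m x) (ac m y))"

definition rho :: "('a::field \<Rightarrow> 'g::linordered_ab_group_add) \<Rightarrow> 'a \<Rightarrow> (nat \<Rightarrow> 'a \<Rightarrow> 'a)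
    \<Rightarrow> nat \<Rightarrow> nat \<Rightarrow> 'a \<Rightarrow> 'a set" where
  "rho ord pi ac n m x = {y. lsim ord pi ac n m x y}"

datatype 'a kterm = KVar nat | KConst 'a | KAdd "'a kterm" "'a kterm" | KPi "'a kterm"

text \<open>terms of an auxiliary sort Lambda_{n,m}; the sort is fixed by the atom/quantifier\<close>
datatype 'a lterm = LVar nat | LRho "'a kterm"

datatype 'a fm =
    FEq "'a kterm" "'a kterm"
  | FDiv "'a kterm" "'a kterm"
  | FLEq nat nat "'a lterm" "'a lterm"
  | FNot "'a fm"
  | FAnd "'a fm" "'a fm"
  | FExK nat "'a fm"
  | FExL nat nat nat "'a fm"

fun wf_fm :: "'a fm \<Rightarrow> bool" where
  "wf_fm (FLEq n m a b) = (1 \<le> n \<and> 1 \<le> m)"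
| "wf_fm (FNot p) = wf_fm p"
| "wf_fm (FAnd p q) = (wf_fm p \<and> wf_fm q)"
| "wf_fm (FExK i p) = wf_fm p"
| "wf_fm (FExL n m i p) = (1 \<le> n \<and> 1 \<le> m \<and> wf_fm p)"
| "wf_fm _ = True"

fun keval :: "'a::field \<Rightarrow> (nat \<Rightarrow> 'a) \<Rightarrow> 'a kterm \<Rightarrow> 'a" where
  "keval pi e (KVar i) = e i"
| "keval pi e (KConst c) = c"
| "keval pi e (KAdd s t) = keval pi e s + keval pi e t"
| "keval pi e (KPi t) = pi * keval pi e t"

text \<open>Variables of sort Lambda_{n,m} are valued by le n m i, an element of Lambda_{n,m}
  (an equivalence class).\<close>
fun leval :: "('a::field \<Rightarrow> 'g::linordered_ab_group_add) \<Rightarrow> 'a \<Rightarrow> (nat \<Rightarrow> 'a \<Rightarrow> 'a)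
    \<Rightarrow> nat \<Rightarrow> nat \<Rightarrow> (nat \<Rightarrow> 'a) \<Rightarrow> (nat \<Rightarrow> nat \<Rightarrow> nat \<Rightarrow> 'a set) \<Rightarrow> 'a lterm \<Rightarrow> 'a set" where
  "leval ord pi ac n m e le (LVar i) = le n m i"
| "leval ord pi ac n m e le (LRho t) = rho ord pi ac n m (keval pi e t)"

fun sat :: "('a::field \<Rightarrow> 'g::linordered_ab_group_add) \<Rightarrow> 'a \<Rightarrow> (nat \<Rightarrow> 'a \<Rightarrow> 'a)
    \<Rightarrow> 'a fm \<Rightarrow> (nat \<Rightarrow> 'a) \<Rightarrow> (nat \<Rightarrow> nat \<Rightarrow> nat \<Rightarrow> 'a set) \<Rightarrow> bool" where
  "sat ord pi ac (FEq s t) e le = (keval pi e s = keval pi e t)"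
| "sat ord pi ac (FDiv s t) e le = vdvd ord (keval pi e s) (keval pi e t)"
| "sat ord pi ac (FLEq n m a b) e le =
     (leval ord pi ac n m e le a = leval ord pi ac n m e le b)"
| "sat ord pi ac (FNot p) e le = (\<not> sat ord pi ac p e le)"
| "sat ord pi ac (FAnd p q) e le = (sat ord pi ac p e le \<and> sat ord pi ac q e le)"
| "sat ord pi ac (FExK i p) e le = (\<exists>x. sat ord pi ac p (e(i := x)) le)"
| "sat ord pi ac (FExL n m i p) e le =
     (\<exists>x. sat ord pi ac p e (le(n := (le n)(m := (le n m)(i := rho ord pi ac n m x)))))"

text \<open>Definability with parameters (parameters occur as constants KConst).\<close>
definition definable1 :: "('a::field \<Rightarrow> 'g::linordered_ab_group_add) \<Rightarrow> 'a \<Rightarrow> (nat \<Rightarrow> 'a \<Rightarrow> 'a)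
    \<Rightarrow> 'a set \<Rightarrow> bool" where
  "definable1 ord pi ac S \<longleftrightarrow>
     (\<exists>\<phi>. wf_fm \<phi> \<and> (\<forall>e le. sat ord pi ac \<phi> e le \<longleftrightarrow> e 0 \<in> S))"

definition definable2 :: "('a::field \<Rightarrow> 'g::linordered_ab_group_add) \<Rightarrow> 'a \<Rightarrow> (nat \<Rightarrow> 'a \<Rightarrow> 'a)
    \<Rightarrow> ('a \<times> 'a) set \<Rightarrow> bool" where
  "definable2 ord pi ac S \<longleftrightarrow>
     (\<exists>\<phi>. wf_fm \<phi> \<and> (\<forall>e le. sat ord pi ac \<phi> e le \<longleftrightarrow> (e 0, e 1) \<in> S))"

end

theory Submission
  imports Defs
begin

lemma natmul_0[simp]: "natmul 0 g = 0" unfolding natmul_def by simp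
lemma natmul_Suc: "natmul (Suc a) g = g + natmul a g" unfolding natmul_def by (simp add: add.commute)
lemma natmul_add: "natmul (a + b) g = natmul a g + natmul b g"
  by (induction a) (simp_all add: natmul_Suc add.assoc)
lemma natmul_mult: "natmul (a * b) g = natmul a (natmul b g)"
  by (induction a) (simp_all add: natmul_add natmul_Suc)
lemma natmul_plus: "natmul n (a + b) = natmul n a + natmul n b"
  by (induction n) (simp_all add: natmul_Suc algebra_simps)
lemma natmul_diff: "natmul n (a - b) = natmul n a - natmul n b"
  by (induction n) (simp_all add: natmul_Suc)

locale zf =
  fixes ord :: "'a::field \<Rightarrow> 'g::linordered_ab_group_add"
    and pi :: 'a and ac :: "nat \<Rightarrow> 'a \<Rightarrow> 'a"
  assumes Z: "zfield ord pi ac"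
begin

lemma mult: "x \<noteq> 0 \<Longrightarrow> y \<noteq> 0 \<Longrightarrow> ord (x * y) = ord x + ord y"
  using Z[unfolded zfield_def, THEN conjunct2, THEN conjunct1] by blast
lemma ultra: "x \<noteq> 0 \<Longrightarrow> y \<noteq> 0 \<Longrightarrow> x + y \<noteq> 0 \<Longrightarrow> min (ord x) (ord y) \<le> ord (x + y)"
  using Z[unfolded zfield_def, THEN conjunct2, THEN conjunct2, THEN conjunct1] by blast
lemma pi0: "pi \<noteq> 0" using Z[unfolded zfield_def, THEN conjunct2, THEN conjunct2, THEN conjunct2, THEN conjunct1] .
lemma zg: "zgroup (ord pi)" using Z[unfolded zfield_def, THEN conjunct2, THEN conjunct2, THEN conjunct2, THEN conjunct2, THEN conjunct1] .

lemma ord1: "ord 1 = 0"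
  using mult[of 1 1] by simp

lemma ordm1: "ord (-1) = 0"
  using mult[of "-1" "-1"] ord1 by simp

lemma ordneg: "z \<noteq> 0 \<Longrightarrow> ord (- z) = ord z"
  using mult[of "-1" z] ordm1 by simp

definition pc where "pc a b \<longleftrightarrow> a = b \<or> ord pi \<le> ord (a - b)"

lemma pcong1: "pcong ord pi 1 a b = pc a b"
  unfolding pcong_def vdvd_def pc_def using pi0 by auto

lemma pc_refl: "pc a a" unfolding pc_def by simp
lemma pc_sym: "pc a b \<Longrightarrow> pc b a"
proof -
  assume h: "pc a b"
  show "pc b a"
  proof (cases "a = b")
    case False
    have "b - a = - (a - b)" by simp
    then have "ord (b - a) = ord (a - b)" using ordneg[of "a - b"] False by simp
    then show ?thesis using h unfolding pc_def by auto
  qed (simp add: pc_refl)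
qed

lemma pc_trans: "pc a b \<Longrightarrow> pc b c \<Longrightarrow> pc a c"
  unfolding pc_def
proof (elim disjE)
  assume h1: "ord pi \<le> ord (a - b)" and h2: "ord pi \<le> ord (b - c)"
  show "a = c \<or> ord pi \<le> ord (a - c)"
  proof (cases "a = b \<or> b = c \<or> a = c")
    case True then show ?thesis using h1 h2 by auto
  next
    case False
    then have "min (ord (a - b)) (ord (b - c)) \<le> ord ((a - b) + (b - c))"
      by (intro ultra) auto
    then show ?thesis using h1 h2 by (simp del: min_le_iff_disj) (meson min.bounded_iff order_trans)
  qed
qed auto

lemma pc_multr: "pc a b \<Longrightarrow> c \<in> vring ord \<Longrightarrow> pc (a * c) (b * c)"
  unfolding pc_def vring_def
proof (elim disjE)
  assume h: "ord pi \<le> ord (a - b)" and c: "c \<in> {x. x = 0 \<or> 0 \<le> ord x}"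
  show "a * c = b * c \<or> ord pi \<le> ord (a * c - b * c)"
  proof (cases "c = 0 \<or> a = b")
    case True then show ?thesis by auto
  next
    case False
    then have "ord ((a - b) * c) = ord (a - b) + ord c" by (intro mult) auto
    moreover have "0 \<le> ord c" using c False by auto
    ultimately show ?thesis using h by (simp add: algebra_simps) (metis add_increasing2 le_add_same_cancel1 add.commute order_trans h)
  qed
qed auto

lemma pc_prod: "pc a a' \<Longrightarrow> pc b b' \<Longrightarrow> b \<in> vring ord \<Longrightarrow> a' \<in> vring ord \<Longrightarrow> pc (a * b) (a' * b')"
  using pc_trans[OF pc_multr[of a a' b] pc_multr[of b b' a', simplified mult.commute]]
  by (simp add: mult.commute)

lemma ac_in: "ac 1 x \<in> vring ord" using Z[unfolded zfield_def, THEN conjunct2, THEN conjunct2, THEN conjunct2, THEN conjunct2, THEN conjunct2, THEN conjunct1] by blast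
lemma ac_unit: "x \<noteq> 0 \<Longrightarrow> ac 1 x \<noteq> 0 \<and> ord (ac 1 x) = 0" using Z[unfolded zfield_def, THEN conjunct2, THEN conjunct2, THEN conjunct2, THEN conjunct2, THEN conjunct2, THEN conjunct2, THEN conjunct1] by blast
lemma ac_mult: "x \<noteq> 0 \<Longrightarrow> y \<noteq> 0 \<Longrightarrow> pc (ac 1 (x * y)) (ac 1 x * ac 1 y)"
  using Z[unfolded zfield_def, THEN conjunct2, THEN conjunct2, THEN conjunct2, THEN conjunct2, THEN conjunct2, THEN conjunct2, THEN conjunct2, THEN conjunct1] unfolding pcong1[symmetric] by blast
lemma ac_pi: "pc (ac 1 pi) 1" using Z[unfolded zfield_def, THEN conjunct2, THEN conjunct2, THEN conjunct2, THEN conjunct2, THEN conjunct2, THEN conjunct2, THEN conjunct2, THEN conjunct2, THEN conjunct1] unfolding pcong1[symmetric] by blast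
lemma ac_u: "u \<noteq> 0 \<Longrightarrow> ord u = 0 \<Longrightarrow> pc (ac 1 u) u" using Z[unfolded zfield_def, THEN conjunct2, THEN conjunct2, THEN conjunct2, THEN conjunct2, THEN conjunct2, THEN conjunct2, THEN conjunct2, THEN conjunct2, THEN conjunct2, THEN conjunct1] unfolding pcong1[symmetric] by blast

lemma one_in: "1 \<in> vring ord" unfolding vring_def using ord1 by simp

lemma ac_pipow: "pc (ac 1 (pi ^ k)) 1"
proof (induction k)
  case 0
  then show ?case using ac_u[of 1] ord1 by simp
next
  case (Suc k)
  have "pc (ac 1 (pi * pi ^ k)) (ac 1 pi * ac 1 (pi ^ k))" using pi0 by (intro ac_mult) auto
  moreover have "pc (ac 1 pi * ac 1 (pi ^ k)) (1 * 1)"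
    using ac_pi Suc ac_in one_in by (intro pc_prod) auto
  ultimately show ?case using pc_trans by simp
qed

lemma ord_pipow: "ord (pi ^ k) = natmul k (ord pi)"
  by (induction k) (simp_all add: ord1 natmul_Suc mult pi0)

lemma gamma_eq: "r < n \<Longrightarrow> ord x = natmul n d + natmul r (ord pi) \<Longrightarrow> gamma ord pi n x = r"
proof -
  assume r: "r < n" and o: "ord x = natmul n d + natmul r (ord pi)"
  have "1 \<le> n" using r by simp
  then have u: "\<exists>!r. r < n \<and> (\<exists>d. ord x = natmul n d + natmul r (ord pi))"
    using zg unfolding zgroup_def by blast
  show ?thesis unfolding gamma_def
    by (rule the1_equality[OF u]) (use r o in blast)
qed

lemma gamma_ex: "1 \<le> n \<Longrightarrow> gamma ord pi n x < n \<and> (\<exists>d. ord x = natmul n d + natmul (gamma ord pi n x) (ord pi))"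
proof -
  assume "1 \<le> n"
  then have u: "\<exists>!r. r < n \<and> (\<exists>d. ord x = natmul n d + natmul r (ord pi))"
    using zg unfolding zgroup_def by blast
  show ?thesis unfolding gamma_def by (rule theI'[OF u])
qed

lemma split_k: "natmul k g = natmul n (natmul (k div n) g) + natmul (k mod n) g"
  by (metis div_mult_mod_eq natmul_add natmul_mult mult.commute)

lemma gamma_k: "1 \<le> n \<Longrightarrow> ord x = natmul k (ord pi) \<Longrightarrow> gamma ord pi n x = k mod n"
  using gamma_eq[of "k mod n" n x] split_k[of k "ord pi" n] by simp

lemma lsim_sym: "lsim ord pi ac n 1 x y \<Longrightarrow> lsim ord pi ac n 1 y x"
  unfolding lsim_def pcong1 using pc_sym by auto
lemma lsim_trans: "lsim ord pi ac n 1 x y \<Longrightarrow> lsim ord pi ac n 1 y z \<Longrightarrow> lsim ord pi ac n 1 x z"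
  unfolding lsim_def pcong1 using pc_trans by auto
lemma lsim_refl: "lsim ord pi ac n 1 x x"
  unfolding lsim_def pcong1 using pc_refl by auto

lemma rho_eq: "rho ord pi ac n 1 x = rho ord pi ac n 1 y \<longleftrightarrow> lsim ord pi ac n 1 x y"
  unfolding rho_def using lsim_sym lsim_trans lsim_refl by blast

lemma keval_pow: "keval pi e ((KPi ^^ k) t) = pi ^ k * keval pi e t"
  by (induction k) simp_all

end

theorem mainTheorem1:
  fixes ord :: "'a::field \<Rightarrow> 'g::linordered_ab_group_add"
    and pi :: 'a and ac :: "nat \<Rightarrow> 'a \<Rightarrow> 'a"
  assumes "zfield ord pi ac"
  shows "definable2 ord pi ac {(x, y). val ord x = val ord y} \<and>
         (\<forall>k n::nat. 1 \<le> n \<longrightarrow>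
            definable1 ord pi ac {x. x \<noteq> 0 \<and> (\<exists>d. ord x = natmul n d + natmul k (ord pi))})"
proof
  interpret zf ord pi ac by standard (rule assms)
  show "definable2 ord pi ac {(x, y). val ord x = val ord y}"
    unfolding definable2_def
    apply (rule exI[of _ "FAnd (FDiv (KVar 0) (KVar 1)) (FDiv (KVar 1) (KVar 0))"])
    apply (auto simp: vdvd_def val_def)
    done
next
  interpret zf ord pi ac by standard (rule assms)
  show "\<forall>k n::nat. 1 \<le> n \<longrightarrow>
            definable1 ord pi ac {x. x \<noteq> 0 \<and> (\<exists>d. ord x = natmul n d + natmul k (ord pi))}"
  proof (intro allI impI)
    fix k n :: nat assume n: "1 \<le> n"
    let ?phi = "FExK 1 (FAnd (FDiv (KVar 1) (KConst 1)) (FAnd (FDiv (KConst 1) (KVar 1))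
                  (FLEq n 1 (LRho (KVar 0)) (LRho ((KPi ^^ k) (KVar 1))))))"
    have key: "(\<exists>u. u \<noteq> 0 \<and> ord u = 0 \<and> lsim ord pi ac n 1 x (pi ^ k * u))
        \<longleftrightarrow> x \<noteq> 0 \<and> (\<exists>d. ord x = natmul n d + natmul k (ord pi))" for x
    proof
      assume "\<exists>u. u \<noteq> 0 \<and> ord u = 0 \<and> lsim ord pi ac n 1 x (pi ^ k * u)"
      then obtain u where u: "u \<noteq> 0" "ord u = 0" and l: "lsim ord pi ac n 1 x (pi ^ k * u)" by blast
      have y0: "pi ^ k * u \<noteq> 0" using u pi0 by simp
      have oy: "ord (pi ^ k * u) = natmul k (ord pi)" using u pi0 by (simp add: mult ord_pipow)
      from l y0 have x0: "x \<noteq> 0" and g: "gamma ord pi n x = gamma ord pi n (pi ^ k * u)"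
        unfolding lsim_def by auto
      have gk: "gamma ord pi n x = k mod n" using g gamma_k[OF n oy] by simp
      obtain d where d: "ord x = natmul n d + natmul (k mod n) (ord pi)" using gamma_ex[OF n, of x] gk by auto
      have "ord x = natmul n (d - natmul (k div n) (ord pi)) + natmul k (ord pi)"
        using d split_k[of k "ord pi" n] by (simp add: natmul_diff)
      then show "x \<noteq> 0 \<and> (\<exists>d. ord x = natmul n d + natmul k (ord pi))" using x0 by blast
    next
      assume "x \<noteq> 0 \<and> (\<exists>d. ord x = natmul n d + natmul k (ord pi))"
      then obtain d where x0: "x \<noteq> 0" and d: "ord x = natmul n d + natmul k (ord pi)" by blast
      define u where "u = ac 1 x"
      have u: "u \<noteq> 0" "ord u = 0" using ac_unit[OF x0] u_def by auto
      have y0: "pi ^ k * u \<noteq> 0" using u pi0 by simp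
      have oy: "ord (pi ^ k * u) = natmul k (ord pi)" using u pi0 by (simp add: mult ord_pipow)
      have "ord x = natmul n (d + natmul (k div n) (ord pi)) + natmul (k mod n) (ord pi)"
        using d split_k[of k "ord pi" n] by (simp add: natmul_plus add.assoc)
      then have gx: "gamma ord pi n x = k mod n"
        using gamma_eq[of "k mod n" n x] n by simp
      have gy: "gamma ord pi n (pi ^ k * u) = k mod n" using gamma_k[OF n oy] .
      have "pc (ac 1 (pi ^ k * u)) (ac 1 (pi ^ k) * ac 1 u)" using pi0 u by (intro ac_mult) auto
      moreover have "pc (ac 1 (pi ^ k) * ac 1 u) (1 * u)"
        using ac_pipow ac_u[OF u] ac_in one_in by (intro pc_prod) auto
      ultimately have "pc (ac 1 (pi ^ k * u)) u" using pc_trans by simp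
      then have "pc (ac 1 x) (ac 1 (pi ^ k * u))" using pc_sym u_def by simp
      then have "lsim ord pi ac n 1 x (pi ^ k * u)"
        unfolding lsim_def pcong1 using x0 y0 gx gy by auto
      then show "\<exists>u. u \<noteq> 0 \<and> ord u = 0 \<and> lsim ord pi ac n 1 x (pi ^ k * u)" using u by blast
    qed
    have "sat ord pi ac ?phi e le \<longleftrightarrow> e 0 \<in> {x. x \<noteq> 0 \<and> (\<exists>d. ord x = natmul n d + natmul k (ord pi))}" for e le
    proof -
      have "sat ord pi ac ?phi e le \<longleftrightarrow> (\<exists>u. u \<noteq> 0 \<and> ord u = 0 \<and> lsim ord pi ac n 1 (e 0) (pi ^ k * u))"
        proof -
        have u1: "vdvd ord u 1 \<and> vdvd ord 1 u \<longleftrightarrow> u \<noteq> 0 \<and> ord u = 0" for u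
          unfolding vdvd_def using ord1 by auto
        have "sat ord pi ac ?phi e le \<longleftrightarrow> (\<exists>u. (vdvd ord u 1 \<and> vdvd ord 1 u) \<and>
              rho ord pi ac n 1 (e 0) = rho ord pi ac n 1 (pi ^ k * u))"
          by (simp add: keval_pow)
        also have "\<dots> \<longleftrightarrow> (\<exists>u. u \<noteq> 0 \<and> ord u = 0 \<and> lsim ord pi ac n 1 (e 0) (pi ^ k * u))"
          unfolding u1 rho_eq by blast
        finally show ?thesis .
      qed
      then show ?thesis using key by simp
    qed
    then show "definable1 ord pi ac {x. x \<noteq> 0 \<and> (\<exists>d. ord x = natmul n d + natmul k (ord pi))}"
      unfolding definable1_def using n by (intro exI[of _ ?phi]) simp
  qed
qed

end
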